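(* Let $b>0$ and let $h,k\in\mathbb{R}$ satisfy $k\geqslant 4bh-b^2$ and $k\geqslant 2b$. Consider a point $(\mathbf{s},\mathbf{r})\in\mathcal{P}^4$ lying on the common level set $\{H=h,\ K=k\}$ with $r_3\neq 0$. Put $z=r_3^2$ and $u=s_1^2+s_2^2+b/r_3^2$, and let $x,y$ be the separation variables, i.e. the two roots of $s^2-\frac{2b}{z}s+\left(\frac{2bu}{z}-k\right)=0$, so that $$z=\frac{2b}{x+y},\qquad u=\frac{xy+k}{x+y}.$$ Define the polynomials $$w_1=2b+k-x^2,\quad w_2=2b-k+x^2,\quad w_3=4bh-k-2bx+x^2,$$ $$w_4=2b+k-y^2,\quad w_5=-2b+k-y^2,\quad w_6=-4bh+k+2by-y^2.$$ Then, for an appropriate choice of the branches of the square roots, the phase variables are expressed algebraically in terms of $x,y$ as $$s_1=-\frac{\sqrt{w_2w_5}}{2\sqrt{2b}\sqrt{x+y}},\qquad s_2=\frac{\sqrt{w_1w_4}}{2\sqrt{2b}\sqrt{x+y}},\qquad s_3=\frac{\sqrt{w_1w_2w_6}+\sqrt{w_3w_4w_5}}{2\sqrt{b}\,(x^2-y^2)},$$ $$r_1=\frac{\sqrt{w_2w_3w_4}-\sqrt{w_1w_5w_6}}{2\sqrt{b}\,(x^2-y^2)},\qquad r_2=-\frac{\sqrt{w_2w_4w_6}+\sqrt{w_1w_3w_5}}{2\sqrt{b}\,(x^2-y^2)},\qquad r_3=\sqrt{\frac{2b}{x+y}}.$$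
   Context: Goryachev's integrable case of rigid body dynamics (with the normalization $c=1$). On $\mathbb{R}^6$ with coordinates $\mathbf{s}=(s_1,s_2,s_3)$, $\mathbf{r}=(r_1,r_2,r_3)$, take the Poisson brackets $\{s_i,s_j\}=-\varepsilon_{ijk}s_k$, $\{s_i,r_j\}=-\varepsilon_{ijk}r_k$, $\{r_i,r_j\}=0$, and the Hamiltonian $$H=\tfrac12(s_1^2+s_2^2+2s_3^2)+\tfrac12\Big[(r_1^2-r_2^2)+\frac{b}{r_3^2}\Big],$$ $b$ a real parameter. The equations of motion are $\dot s_1=s_2s_3+r_2r_3-b\,r_2/r_3^3$, $\dot s_2=-s_1s_3+r_1r_3+b\,r_1/r_3^2$, $\dot s_3=-2r_1r_2$, $\dot r_1=2s_3r_2-s_2r_3$, $\dot r_2=-2s_3r_1+s_1r_3$, $\dot r_3=s_2r_1-s_1r_2$. The Casimir functions are $\Gamma=r_1^2+r_2^2+r_3^2$, $L=s_1r_1+s_2r_2+s_3r_3$, and $\mathcal{P}^4=\{(\mathbf{s},\mathbf{r}):\Gamma=1,\ L=0\}$. The additional first integral on $\mathcal{P}^4$ is $$K=\Big(s_1^2+s_2^2+\frac{b}{r_3^2}\Big)^2+2r_3^2(s_1^2-s_2^2)+r_3^4.$$ *)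

theory Defs
  imports Complex_Main
begin

text \<open>Goryachev case, c = 1. Phase point (s1,s2,s3,r1,r2,r3) in R^6.\<close>

definition gor_H :: "real \<Rightarrow> real \<Rightarrow> real \<Rightarrow> real \<Rightarrow> real \<Rightarrow> real \<Rightarrow> real \<Rightarrow> real" where
  "gor_H b s1 s2 s3 r1 r2 r3 =
     (s1^2 + s2^2 + 2 * s3^2) / 2 + ((r1^2 - r2^2) + b / r3^2) / 2"

definition gor_K :: "real \<Rightarrow> real \<Rightarrow> real \<Rightarrow> real \<Rightarrow> real \<Rightarrow> real \<Rightarrow> real \<Rightarrow> real" where
  "gor_K b s1 s2 s3 r1 r2 r3 =
     (s1^2 + s2^2 + b / r3^2)^2 + 2 * r3^2 * (s1^2 - s2^2) + r3^4"

definition gor_Gamma :: "real \<Rightarrow> real \<Rightarrow> real \<Rightarrow> real" where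
  "gor_Gamma r1 r2 r3 = r1^2 + r2^2 + r3^2"

definition gor_L :: "real \<Rightarrow> real \<Rightarrow> real \<Rightarrow> real \<Rightarrow> real \<Rightarrow> real \<Rightarrow> real" where
  "gor_L s1 s2 s3 r1 r2 r3 = s1 * r1 + s2 * r2 + s3 * r3"

definition sqrt_branch :: "real \<Rightarrow> real \<Rightarrow> bool" where
  "sqrt_branch q a \<longleftrightarrow> q = sqrt a \<or> q = - sqrt a"

end

theory Submission
  imports Defs
begin

lemma br_aux: "q^2 = a \<Longrightarrow> sqrt_branch q a \<and> a \<ge> 0"
proof -
  assume h: "q^2 = a"
  have "sqrt a = \<bar>q\<bar>" using h real_sqrt_abs by blast
  moreover have "a \<ge> 0" using h by auto
  ultimately show ?thesis unfolding sqrt_branch_def by (cases "q \<ge> 0") auto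
qed

lemma id1:
  fixes b s1 s2 s3 r1 r2 r3 ri x y k :: real
  assumes ri: "r3*ri = 1"
    and G: "r1^2+r2^2+r3^2 = 1" and L: "s1*r1+s2*r2+s3*r3 = 0"
    and hk: "k = (s1^2+s2^2+b*ri^2)^2 + 2*r3^2*(s1^2-s2^2) + r3^4"
    and sig: "x + y = 2*b*ri^2"
    and pi: "x*y = 2*b*(s1^2+s2^2+b*ri^2)*ri^2 - k"
  shows "8*b*(x+y)*s1^2 = (2*b-k+x^2)*(-2*b+k-y^2)"
  using assms by algebra

lemma id2:
  fixes b s1 s2 s3 r1 r2 r3 ri x y k :: real
  assumes ri: "r3*ri = 1"
    and G: "r1^2+r2^2+r3^2 = 1" and L: "s1*r1+s2*r2+s3*r3 = 0"
    and hk: "k = (s1^2+s2^2+b*ri^2)^2 + 2*r3^2*(s1^2-s2^2) + r3^4"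
    and sig: "x + y = 2*b*ri^2"
    and pi: "x*y = 2*b*(s1^2+s2^2+b*ri^2)*ri^2 - k"
  shows "8*b*(x+y)*s2^2 = (2*b+k-x^2)*(2*b+k-y^2)"
  using assms by algebra

lemma id3:
  fixes b s1 s2 s3 r1 r2 r3 ri x y k h :: real
  assumes ri: "r3*ri = 1"
    and G: "r1^2+r2^2+r3^2 = 1" and L: "s1*r1+s2*r2+s3*r3 = 0"
    and hk: "k = (s1^2+s2^2+b*ri^2)^2 + 2*r3^2*(s1^2-s2^2) + r3^4"
    and hh: "h = (s1^2 + s2^2 + 2 * s3^2) / 2 + ((r1^2 - r2^2) + b*ri^2) / 2"
    and sig: "x + y = 2*b*ri^2"
    and pi: "x*y = 2*b*(s1^2+s2^2+b*ri^2)*ri^2 - k"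
  shows "b*(x+y)^2*(-2*s3*(s1^2+s2^2+r3^2)-4*s2*r2*r3 + s3*(x-y))^2
     = (2*b+k-x^2)*(2*b-k+x^2)*(- 4 * b * h + k + 2 * b * y - y^2)"
  using assms by algebra

lemma id4:
  fixes b s1 s2 s3 r1 r2 r3 ri x y k h :: real
  assumes ri: "r3*ri = 1"
    and G: "r1^2+r2^2+r3^2 = 1" and L: "s1*r1+s2*r2+s3*r3 = 0"
    and hk: "k = (s1^2+s2^2+b*ri^2)^2 + 2*r3^2*(s1^2-s2^2) + r3^4"
    and hh: "h = (s1^2 + s2^2 + 2 * s3^2) / 2 + ((r1^2 - r2^2) + b*ri^2) / 2"
    and sig: "x + y = 2*b*ri^2"
    and pi: "x*y = 2*b*(s1^2+s2^2+b*ri^2)*ri^2 - k"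
  shows "b*(x+y)^2*(-(-2*s3*(s1^2+s2^2+r3^2)-4*s2*r2*r3) + s3*(x-y))^2
     = (4 * b * h - k - 2 * b * x + x^2)*(2 * b + k - y^2)*(- 2 * b + k - y^2)"
  using assms by algebra

lemma id5:
  fixes b s1 s2 s3 r1 r2 r3 ri x y k h :: real
  assumes ri: "r3*ri = 1"
    and G: "r1^2+r2^2+r3^2 = 1" and L: "s1*r1+s2*r2+s3*r3 = 0"
    and hk: "k = (s1^2+s2^2+b*ri^2)^2 + 2*r3^2*(s1^2-s2^2) + r3^4"
    and hh: "h = (s1^2 + s2^2 + 2 * s3^2) / 2 + ((r1^2 - r2^2) + b*ri^2) / 2"
    and sig: "x + y = 2*b*ri^2"
    and pi: "x*y = 2*b*(s1^2+s2^2+b*ri^2)*ri^2 - k"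
  shows "b*(x+y)^2*(2*r1*(r3^2+s1^2-s2^2)+4*s1*s2*r2 + r1*(x-y))^2
     = (2 * b - k + x^2)*(4 * b * h - k - 2 * b * x + x^2)*(2 * b + k - y^2)"
  using assms by algebra

lemma id6:
  fixes b s1 s2 s3 r1 r2 r3 ri x y k h :: real
  assumes ri: "r3*ri = 1"
    and G: "r1^2+r2^2+r3^2 = 1" and L: "s1*r1+s2*r2+s3*r3 = 0"
    and hk: "k = (s1^2+s2^2+b*ri^2)^2 + 2*r3^2*(s1^2-s2^2) + r3^4"
    and hh: "h = (s1^2 + s2^2 + 2 * s3^2) / 2 + ((r1^2 - r2^2) + b*ri^2) / 2"
    and sig: "x + y = 2*b*ri^2"
    and pi: "x*y = 2*b*(s1^2+s2^2+b*ri^2)*ri^2 - k"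
  shows "b*(x+y)^2*(2*r1*(r3^2+s1^2-s2^2)+4*s1*s2*r2 - r1*(x-y))^2
     = (2 * b + k - x^2)*(- 2 * b + k - y^2)*(- 4 * b * h + k + 2 * b * y - y^2)"
  using assms by algebra

lemma id7:
  fixes b s1 s2 s3 r1 r2 r3 ri x y k h :: real
  assumes ri: "r3*ri = 1"
    and G: "r1^2+r2^2+r3^2 = 1" and L: "s1*r1+s2*r2+s3*r3 = 0"
    and hk: "k = (s1^2+s2^2+b*ri^2)^2 + 2*r3^2*(s1^2-s2^2) + r3^4"
    and hh: "h = (s1^2 + s2^2 + 2 * s3^2) / 2 + ((r1^2 - r2^2) + b*ri^2) / 2"
    and sig: "x + y = 2*b*ri^2"
    and pi: "x*y = 2*b*(s1^2+s2^2+b*ri^2)*ri^2 - k"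
  shows "b*(x+y)^2*(-(2*r2*(r3^2+s1^2-s2^2)-4*s1*s2*r1) - r2*(x-y))^2
     = (2 * b - k + x^2)*(2 * b + k - y^2)*(- 4 * b * h + k + 2 * b * y - y^2)"
  using assms by algebra

lemma id8:
  fixes b s1 s2 s3 r1 r2 r3 ri x y k h :: real
  assumes ri: "r3*ri = 1"
    and G: "r1^2+r2^2+r3^2 = 1" and L: "s1*r1+s2*r2+s3*r3 = 0"
    and hk: "k = (s1^2+s2^2+b*ri^2)^2 + 2*r3^2*(s1^2-s2^2) + r3^4"
    and hh: "h = (s1^2 + s2^2 + 2 * s3^2) / 2 + ((r1^2 - r2^2) + b*ri^2) / 2"
    and sig: "x + y = 2*b*ri^2"
    and pi: "x*y = 2*b*(s1^2+s2^2+b*ri^2)*ri^2 - k"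
  shows "b*(x+y)^2*(2*r2*(r3^2+s1^2-s2^2)-4*s1*s2*r1 - r2*(x-y))^2
     = (2 * b + k - x^2)*(4 * b * h - k - 2 * b * x + x^2)*(- 2 * b + k - y^2)"
  using assms by algebra


theorem theorem1:
  fixes b h k s1 s2 s3 r1 r2 r3 x y :: real
  assumes hb: "b > 0"
    and hk1: "k \<ge> 4 * b * h - b^2"
    and hk2: "k \<ge> 2 * b"
    and hGamma: "gor_Gamma r1 r2 r3 = 1"
    and hL: "gor_L s1 s2 s3 r1 r2 r3 = 0"
    and hH: "gor_H b s1 s2 s3 r1 r2 r3 = h"
    and hK: "gor_K b s1 s2 s3 r1 r2 r3 = k"
    and hr3: "r3 \<noteq> 0"
    and hx: "x^2 - (2 * b / r3^2) * x + (2 * b * (s1^2 + s2^2 + b / r3^2) / r3^2 - k) = 0"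
    and hy: "y^2 - (2 * b / r3^2) * y + (2 * b * (s1^2 + s2^2 + b / r3^2) / r3^2 - k) = 0"
    and hxy: "x \<noteq> y"
  shows
    "let w1 = 2 * b + k - x^2;
         w2 = 2 * b - k + x^2;
         w3 = 4 * b * h - k - 2 * b * x + x^2;
         w4 = 2 * b + k - y^2;
         w5 = - 2 * b + k - y^2;
         w6 = - 4 * b * h + k + 2 * b * y - y^2
     in \<exists>q1 q2 q3 q4 q5 q6 q7 q8 q9.
          sqrt_branch q1 (w2 * w5) \<and> sqrt_branch q2 (w1 * w4) \<and>
          sqrt_branch q3 (w1 * w2 * w6) \<and> sqrt_branch q4 (w3 * w4 * w5) \<and>
          sqrt_branch q5 (w2 * w3 * w4) \<and> sqrt_branch q6 (w1 * w5 * w6) \<and>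
          sqrt_branch q7 (w2 * w4 * w6) \<and> sqrt_branch q8 (w1 * w3 * w5) \<and>
          sqrt_branch q9 (2 * b / (x + y)) \<and>
          s1 = - q1 / (2 * sqrt (2 * b) * sqrt (x + y)) \<and>
          s2 = q2 / (2 * sqrt (2 * b) * sqrt (x + y)) \<and>
          s3 = (q3 + q4) / (2 * sqrt b * (x^2 - y^2)) \<and>
          r1 = (q5 - q6) / (2 * sqrt b * (x^2 - y^2)) \<and>
          r2 = - (q7 + q8) / (2 * sqrt b * (x^2 - y^2)) \<and>
          r3 = q9 \<and>
          w2 * w5 \<ge> 0 \<and> w1 * w4 \<ge> 0 \<and> w1 * w2 * w6 \<ge> 0 \<and> w3 * w4 * w5 \<ge> 0 \<and>
          w2 * w3 * w4 \<ge> 0 \<and> w1 * w5 * w6 \<ge> 0 \<and> w2 * w4 * w6 \<ge> 0 \<and>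
          w1 * w3 * w5 \<ge> 0 \<and> x + y > 0"
proof -
  define ri where "ri = 1 / r3"
  have ri: "r3 * ri = 1" using hr3 by (simp add: ri_def)
  have bz: "b / r3^2 = b * ri^2" by (simp add: ri_def power_divide)
  have bz2: "2 * b / r3^2 = 2 * b * ri^2" by (simp add: ri_def power_divide)
  have G: "r1^2+r2^2+r3^2 = 1" using hGamma by (simp add: gor_Gamma_def)
  have L: "s1*r1+s2*r2+s3*r3 = 0" using hL by (simp add: gor_L_def)
  have hk: "k = (s1^2+s2^2+b*ri^2)^2 + 2*r3^2*(s1^2-s2^2) + r3^4"
    using hK by (simp add: gor_K_def bz)
  have hh: "h = (s1^2 + s2^2 + 2 * s3^2) / 2 + ((r1^2 - r2^2) + b*ri^2) / 2"
    using hH by (simp add: gor_H_def bz)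
  define C where "C = 2*b*(s1^2+s2^2+b*ri^2)*ri^2 - k"
  have dz: "\<And>t. t / r3^2 = t * ri^2" by (simp add: ri_def power_divide)
  have hC: "2 * b * (s1^2 + s2^2 + b / r3^2) / r3^2 - k = C"
    unfolding C_def by (simp only: dz)
  have hx': "x^2 - (2*b*ri^2) * x + C = 0" using hx by (simp only: bz2 hC)
  have hy': "y^2 - (2*b*ri^2) * y + C = 0" using hy by (simp only: bz2 hC)
  have "(x - y) * (x + y - 2*b*ri^2) = 0" using hx' hy' by algebra
  hence sig: "x + y = 2*b*ri^2" using hxy by simp
  have pi: "x*y = 2*b*(s1^2+s2^2+b*ri^2)*ri^2 - k"
    using hx' sig unfolding C_def by algebra
  have rine: "ri \<noteq> 0" using ri by auto
  have spos: "x + y > 0" using sig hb rine by simp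
  define sg where "sg = x + y"
  define sb where "sb = sqrt b"
  have sb2: "sb^2 = b" using hb by (simp add: sb_def)
  have sbpos: "sb > 0" using hb by (simp add: sb_def)
  define E where "E = 2 * sqrt (2 * b) * sqrt (x + y)"
  have E2: "E^2 = 8 * b * (x + y)" using hb spos
    by (simp add: E_def power_mult_distrib)
  have Epos: "E > 0" using hb spos by (simp add: E_def)
  define dl where "dl = x - y"
  have dlne: "dl \<noteq> 0" using hxy by (simp add: dl_def)
  have Dd: "2 * sqrt b * (x^2 - y^2) = 2 * sb * sg * dl"
    by (simp add: sb_def sg_def dl_def algebra_simps power2_eq_square)
  have Dne: "2 * sb * sg * dl \<noteq> 0" using sbpos spos dlne by (simp add: sg_def)
  define W3 where "W3 = -2*s3*(s1^2+s2^2+r3^2)-4*s2*r2*r3"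
  define W1 where "W1 = 2*r1*(r3^2+s1^2-s2^2)+4*s1*s2*r2"
  define W2 where "W2 = 2*r2*(r3^2+s1^2-s2^2)-4*s1*s2*r1"
  define q1 where "q1 = - s1 * E"
  define q2 where "q2 = s2 * E"
  define q3 where "q3 = sb * sg * (W3 + s3 * dl)"
  define q4 where "q4 = sb * sg * (- W3 + s3 * dl)"
  define q5 where "q5 = sb * sg * (W1 + r1 * dl)"
  define q6 where "q6 = sb * sg * (W1 - r1 * dl)"
  define q7 where "q7 = sb * sg * (- W2 - r2 * dl)"
  define q8 where "q8 = sb * sg * (W2 - r2 * dl)"
  have sq_aux: "\<And>V. (sb * sg * V)^2 = b * (x+y)^2 * V^2"
    using sb2 by (simp add: sg_def power_mult_distrib)
  have e1: "q1^2 = (2 * b - k + x^2) * (- 2 * b + k - y^2)"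
  proof -
    have A: "q1^2 = s1^2 * (8*b*(x+y))" by (simp add: q1_def power_mult_distrib E2)
    show ?thesis using A id1[OF ri G L hk sig pi] by (simp add: ac_simps)
  qed
  have e2: "q2^2 = (2 * b + k - x^2) * (2 * b + k - y^2)"
  proof -
    have A: "q2^2 = s2^2 * (8*b*(x+y))" by (simp add: q2_def power_mult_distrib E2)
    show ?thesis using A id2[OF ri G L hk sig pi] by (simp add: ac_simps)
  qed
  have e3: "q3^2 = (2 * b + k - x^2) * (2 * b - k + x^2) * (- 4 * b * h + k + 2 * b * y - y^2)"
    using id3[OF ri G L hk hh sig pi] unfolding q3_def sq_aux W3_def dl_def by simp
  have e4: "q4^2 = (4 * b * h - k - 2 * b * x + x^2)*(2 * b + k - y^2)*(- 2 * b + k - y^2)"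
    using id4[OF ri G L hk hh sig pi] unfolding q4_def sq_aux W3_def dl_def by simp
  have e5: "q5^2 = (2 * b - k + x^2)*(4 * b * h - k - 2 * b * x + x^2)*(2 * b + k - y^2)"
    using id5[OF ri G L hk hh sig pi] unfolding q5_def sq_aux W1_def dl_def by simp
  have e6: "q6^2 = (2 * b + k - x^2)*(- 2 * b + k - y^2)*(- 4 * b * h + k + 2 * b * y - y^2)"
    using id6[OF ri G L hk hh sig pi] unfolding q6_def sq_aux W1_def dl_def by simp
  have e7: "q7^2 = (2 * b - k + x^2)*(2 * b + k - y^2)*(- 4 * b * h + k + 2 * b * y - y^2)"
    using id7[OF ri G L hk hh sig pi] unfolding q7_def sq_aux W2_def dl_def by simp
  have e8: "q8^2 = (2 * b + k - x^2)*(4 * b * h - k - 2 * b * x + x^2)*(- 2 * b + k - y^2)"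
    using id8[OF ri G L hk hh sig pi] unfolding q8_def sq_aux W2_def dl_def by simp
  have e9: "r3^2 = 2 * b / (x + y)"
  proof -
    have "r3^2 * (x + y) = 2 * b" using sig ri by (simp add: algebra_simps power2_eq_square)
       (metis mult.assoc mult.left_commute mult_1_right)
    thus ?thesis using spos by (simp add: field_simps)
  qed
  have f1: "s1 = - q1 / (2 * sqrt (2 * b) * sqrt (x + y))"
    using Epos by (simp add: q1_def E_def[symmetric])
  have f2: "s2 = q2 / (2 * sqrt (2 * b) * sqrt (x + y))"
    using Epos by (simp add: q2_def E_def[symmetric])
  have f3: "s3 = (q3 + q4) / (2 * sqrt b * (x^2 - y^2))"
    unfolding Dd using Dne by (simp add: q3_def q4_def field_simps)
  have f4: "r1 = (q5 - q6) / (2 * sqrt b * (x^2 - y^2))"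
    unfolding Dd using Dne by (simp add: q5_def q6_def field_simps)
  have f5: "r2 = - (q7 + q8) / (2 * sqrt b * (x^2 - y^2))"
    unfolding Dd using Dne by (simp add: q7_def q8_def field_simps)
  show ?thesis
    unfolding Let_def
    apply (rule exI[of _ q1], rule exI[of _ q2], rule exI[of _ q3], rule exI[of _ q4],
           rule exI[of _ q5], rule exI[of _ q6], rule exI[of _ q7], rule exI[of _ q8],
           rule exI[of _ r3])
    using br_aux[OF e1] br_aux[OF e2] br_aux[OF e3] br_aux[OF e4] br_aux[OF e5]
      br_aux[OF e6] br_aux[OF e7] br_aux[OF e8] br_aux[OF e9] f1 f2 f3 f4 f5 spos
    by simp
qed

end
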